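(* Let $a<b$ and let $X$ be a random variable taking values in $[a,b]$, with probability density function $f:[a,b]\rightarrow[0,1]$ and cumulative distribution function $F(x)=\Pr(X\le x)=\int_a^x f(t)\,dt$. Assume that $F$ is twice continuously differentiable in $(a,b)$ (so $F'=f$) with $f'\in L^2[a,b]$. Then for all $x\in[a,\frac{a+b}{2}]$, \[ \left|\frac{1}{2}[F(x)+F(a+b-x)]-\frac{b-E(X)}{b-a}\right|\leq \frac{(b-a)^{1/2}}{\pi}\left[\frac{(b-a)^2}{48}+\left(x-\frac{3a+b}{4}\right)^2\right]^{1/2}\|f'\|_2, \] where $E(X)$ is the expectation of $X$.
   Context: $\|g\|_2=\left(\int_a^b g(t)^2\,dt\right)^{1/2}$. *)

theory Defs
  imports "HOL-Analysis.Analysis"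
begin

definition l2norm_on :: "real \<Rightarrow> real \<Rightarrow> (real \<Rightarrow> real) \<Rightarrow> real" where
  "l2norm_on a b g = sqrt (integral {a..b} (\<lambda>t. (g t)\<^sup>2))"

definition expect_dens :: "real \<Rightarrow> real \<Rightarrow> (real \<Rightarrow> real) \<Rightarrow> real" where
  "expect_dens a b f = integral {a..b} (\<lambda>t. t * f t)"

end

theory Submission
  imports Defs
begin


lemma piece_ftc:
  fixes f f' F g :: "real \<Rightarrow> real"
  assumes pq: "p \<le> q" "a \<le> p" "q \<le> b"
   and Fd: "\<forall>x\<in>{a<..<b}. (F has_real_derivative f x) (at x)"
   and fd: "\<forall>x\<in>{a<..<b}. (f has_real_derivative f' x) (at x)"
   and Fc: "continuous_on {a..b} F"
   and gfc: "continuous_on {p..q} (\<lambda>t. g t * f t)"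
   and gd: "\<And>t. (g has_real_derivative (t - c)) (at t)"
  shows "((\<lambda>t. g t * f' t - F t) has_integral
          ((g q * f q - (q - c) * F q) - (g p * f p - (p - c) * F p))) {p..q}"
proof -
  have "((\<lambda>t. g t * f' t - F t) has_integral
        ((\<lambda>t. g t * f t - (t - c) * F t) q - (\<lambda>t. g t * f t - (t - c) * F t) p)) {p..q}"
  proof (rule fundamental_theorem_of_calculus_interior[OF pq(1)])
    have "continuous_on {p..q} F" using Fc continuous_on_subset pq by fastforce
    then show "continuous_on {p..q} (\<lambda>t. g t * f t - (t - c) * F t)"
      by (intro continuous_on_diff[OF gfc] continuous_on_mult continuous_intros)
  next
    fix x assume x: "x \<in> {p<..<q}"
    then have xab: "x \<in> {a<..<b}" using pq by auto
    have d1: "(g has_real_derivative (x - c)) (at x)" using gd .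
    have d2: "(f has_real_derivative f' x) (at x)" using fd xab by blast
    have d3: "(F has_real_derivative f x) (at x)" using Fd xab by blast
    have d4: "((\<lambda>t. t - c) has_real_derivative 1) (at x)"
      by (auto intro!: derivative_eq_intros)
    have "((\<lambda>t. g t * f t - (t - c) * F t) has_real_derivative
          ((x - c) * f x + f' x * g x - (1 * F x + f x * (x - c)))) (at x)"
      by (intro DERIV_diff DERIV_mult d1 d2 d3 d4)
    then show "((\<lambda>t. g t * f t - (t - c) * F t) has_vector_derivative (g x * f' x - F x)) (at x)"
      unfolding has_real_derivative_iff_has_vector_derivative[symmetric]
      by (simp add: algebra_simps)
  qed
  then show ?thesis by simp
qed

lemma poly_int:
  fixes P g :: "real \<Rightarrow> real"
  assumes "p \<le> q" "\<And>t. (P has_real_derivative g t) (at t)"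
  shows "(g has_integral (P q - P p)) {p..q}"
  using assms
  by (intro fundamental_theorem_of_calculus)
     (auto simp: has_real_derivative_iff_has_vector_derivative[symmetric] intro: has_field_derivative_at_within)



lemma cont_prod_bounded:
  fixes G f :: "real \<Rightarrow> real"
  assumes Gc: "continuous_on {a..b} G" and Ga: "G a = 0" and Gb: "G b = 0"
   and fb: "\<forall>t\<in>{a..b}. \<bar>f t\<bar> \<le> 1" and fc: "\<forall>x\<in>{a<..<b}. isCont f x"
  shows "continuous_on {a..b} (\<lambda>t. G t * f t)"
proof (clarsimp simp: continuous_on_eq_continuous_within)
  fix t assume t: "a \<le> t" "t \<le> b"
  show "continuous (at t within {a..b}) (\<lambda>t. G t * f t)"
  proof cases
    assume ti: "t \<in> {a<..<b}"
    then have "isCont G t" using continuous_on_interior[OF Gc] by simp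
    then have "isCont (\<lambda>t. G t * f t) t" using fc ti by (intro continuous_intros) auto
    then show ?thesis using continuous_at_imp_continuous_within by blast
  next
    assume "t \<notin> {a<..<b}"
    then have G0: "G t = 0" using t Ga Gb by auto
    have "(G \<longlongrightarrow> G t) (at t within {a..b})"
      using Gc t by (simp add: continuous_on_def)
    then have lim: "((\<lambda>s. \<bar>G s\<bar>) \<longlongrightarrow> 0) (at t within {a..b})"
      using G0 tendsto_rabs by fastforce
    have ev: "eventually (\<lambda>s. norm (G s * f s) \<le> \<bar>G s\<bar>) (at t within {a..b})"
    proof -
      have "\<forall>s\<in>{a..b}. norm (G s * f s) \<le> \<bar>G s\<bar>"
      proof
        fix s assume "s \<in> {a..b}"
        then have "\<bar>f s\<bar> \<le> 1" using fb by auto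
        then have "\<bar>G s\<bar> * \<bar>f s\<bar> \<le> \<bar>G s\<bar> * 1" by (intro mult_left_mono) auto
        then show "norm (G s * f s) \<le> \<bar>G s\<bar>" by (simp add: abs_mult)
      qed
      then show ?thesis unfolding eventually_at_filter by (auto intro: always_eventually)
    qed
    have "((\<lambda>s. G s * f s) \<longlongrightarrow> 0) (at t within {a..b})"
      by (rule Lim_null_comparison[OF ev lim])
    then show ?thesis unfolding continuous_within using G0 by simp
  qed
qed



theorem theorem4p2:
  fixes a b :: real and f f' F :: "real \<Rightarrow> real"
  assumes ab: "a < b"
    and f_range: "\<forall>t\<in>{a..b}. 0 \<le> f t \<and> f t \<le> 1"
    and f_int: "f integrable_on {a..b}"
    and f_total: "integral {a..b} f = 1"
    and F_def: "\<forall>x\<in>{a..b}. F x = integral {a..x} f"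
    and F_deriv: "\<forall>x\<in>{a<..<b}. (F has_real_derivative f x) (at x)"
    and f_deriv: "\<forall>x\<in>{a<..<b}. (f has_real_derivative f' x) (at x)"
    and f'_cont: "continuous_on {a<..<b} f'"
    and f'_L2: "(\<lambda>t. (f' t)\<^sup>2) integrable_on {a..b}"
    and x: "x \<in> {a..(a+b)/2}"
  shows "\<bar>(F x + F (a + b - x)) / 2 - (b - expect_dens a b f) / (b - a)\<bar>
           \<le> sqrt (b - a) / pi * sqrt ((b - a)\<^sup>2 / 48 + (x - (3*a + b) / 4)\<^sup>2)
              * l2norm_on a b f'"
proof -
  define h where "h = (b - a) / 2"
  define m where "m = (a + b) / 2"
  define y where "y = a + b - x"
  define u where "u = x - a"
  define v where "v = m - x"
  define d where "d = (u^2 - v^2) / 2"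
  define G where "G t = (t - a)^2 / 2 - h * max 0 (t - x) - h * max 0 (t - y)" for t
  define G1 where "G1 t = (t - a)^2 / 2" for t :: real
  define G2 where "G2 t = (t - a)^2 / 2 - h * (t - x)" for t
  define G3 where "G3 t = (t - b)^2 / 2" for t :: real
  have ax: "a \<le> x" and xm: "x \<le> m" using x by (auto simp: m_def)
  have my: "m \<le> y" and yb: "y \<le> b" using ax xm by (auto simp: m_def y_def)
  have u0: "u \<ge> 0" and v0: "v \<ge> 0" using ax xm by (auto simp: u_def v_def)
  have h0: "h > 0" using ab by (simp add: h_def)
  have huv: "h = u + v" by (simp add: h_def u_def v_def m_def)

  have Fc: "continuous_on {a..b} F"
  proof -
    have "continuous_on {a..b} (\<lambda>t. integral {a..t} f)"
      by (rule indefinite_integral_continuous_1[OF f_int])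
    then show ?thesis using F_def by (metis (no_types, lifting) continuous_on_cong)
  qed
  have Fint: "F integrable_on {a..b}" by (rule integrable_continuous_interval[OF Fc])
  define intF where "intF = integral {a..b} F"
  have Fhas: "(F has_integral intF) {a..b}" using Fint by (simp add: intF_def integrable_integral)
  have Fb: "F b = 1" using F_def f_total ab by auto
  have Fa: "F a = 0" using F_def ab by auto

  have tF: "((\<lambda>t. F t + t * f t) has_integral (b * F b - a * F a)) {a..b}"
  proof -
    have "((\<lambda>t. 1 * F t + t * f t) has_integral ((\<lambda>t. t * F t) b - (\<lambda>t. t * F t) a)) {a..b}"
    proof (rule fundamental_theorem_of_calculus_interior)
      show "a \<le> b" using ab by simp
      show "continuous_on {a..b} (\<lambda>t. t * F t)" using Fc by (intro continuous_intros)
    next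
      fix t assume t: "t \<in> {a<..<b}"
      have "((\<lambda>t. t * F t) has_real_derivative (1 * F t + t * f t)) (at t)"
      proof -
        have d3: "(F has_real_derivative f t) (at t)" using F_deriv t by blast
        show ?thesis by (rule DERIV_cong[OF DERIV_mult[OF DERIV_ident d3]]) simp
      qed
      then show "((\<lambda>t. t * F t) has_vector_derivative (1 * F t + t * f t)) (at t)"
        by (simp add: has_real_derivative_iff_has_vector_derivative)
    qed
    then show ?thesis by simp
  qed
  have "((\<lambda>t. (F t + t * f t) - F t) has_integral (b - intF)) {a..b}"
    using has_integral_diff[OF tF Fhas] Fa Fb by simp
  then have Ehas: "((\<lambda>t. t * f t) has_integral (b - intF)) {a..b}" by simp
  have E: "expect_dens a b f = b - intF"
    using Ehas by (simp add: expect_dens_def integral_unique)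

  have Gc: "continuous_on {a..b} G" unfolding G_def by (intro continuous_intros) auto
  have Ga: "G a = 0" using ax my xm by (simp add: G_def max_def)
  have Gb: "G b = 0"
  proof -
    have "max 0 (b - x) = b - x" "max 0 (b - y) = b - y" using yb xm my by auto
    then have "G b = (b-a)^2/2 - h*(b-x) - h*(b-y)" by (simp add: G_def)
    also have "\<dots> = 0" by (simp add: h_def y_def power2_eq_square field_simps)
    finally show ?thesis .
  qed
  have Gfc: "continuous_on {a..b} (\<lambda>t. G t * f t)"
  proof (rule cont_prod_bounded[OF Gc Ga Gb])
    show "\<forall>t\<in>{a..b}. \<bar>f t\<bar> \<le> 1" using f_range by auto
    show "\<forall>x\<in>{a<..<b}. isCont f x" using f_deriv DERIV_isCont by blast
  qed
  have G1eq: "G t = G1 t" if "t \<le> x" for t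
  proof -
    have "max 0 (t - x) = 0" "max 0 (t - y) = 0" using that xm my by auto
    then show ?thesis by (simp add: G_def G1_def)
  qed
  have G2eq: "G t = G2 t" if "x \<le> t" "t \<le> y" for t
  proof -
    have "max 0 (t - x) = t - x" "max 0 (t - y) = 0" using that by auto
    then show ?thesis by (simp add: G_def G2_def)
  qed
  have G3eq: "G t = G3 t" if "y \<le> t" for t
  proof -
    have "max 0 (t - x) = t - x" "max 0 (t - y) = t - y" using that xm my by auto
    then have "G t = (t-a)^2/2 - h*(t-x) - h*(t-y)" by (simp add: G_def)
    also have "\<dots> = G3 t" by (simp add: G3_def h_def y_def power2_eq_square field_simps)
    finally show ?thesis .
  qed

  have G1d: "\<And>t. (G1 has_real_derivative (t - a)) (at t)"
    unfolding G1_def by (auto intro!: derivative_eq_intros)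
  have G2d: "\<And>t. (G2 has_real_derivative (t - m)) (at t)"
    unfolding G2_def by (auto intro!: derivative_eq_intros simp: h_def m_def field_simps)
  have G3d: "\<And>t. (G3 has_real_derivative (t - b)) (at t)"
    unfolding G3_def by (auto intro!: derivative_eq_intros)

  have c1: "continuous_on {a..x} (\<lambda>t. G1 t * f t)"
  proof (rule continuous_on_eq)
    show "continuous_on {a..x} (\<lambda>t. G t * f t)"
      by (rule continuous_on_subset[OF Gfc]) (use ax xm my yb in auto)
    show "G t * f t = G1 t * f t" if "t \<in> {a..x}" for t using that by (simp add: G1eq)
  qed
  have c2: "continuous_on {x..y} (\<lambda>t. G2 t * f t)"
  proof (rule continuous_on_eq)
    show "continuous_on {x..y} (\<lambda>t. G t * f t)"
      by (rule continuous_on_subset[OF Gfc]) (use ax xm my yb in auto)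
    show "G t * f t = G2 t * f t" if "t \<in> {x..y}" for t using that by (simp add: G2eq)
  qed
  have c3: "continuous_on {y..b} (\<lambda>t. G3 t * f t)"
  proof (rule continuous_on_eq)
    show "continuous_on {y..b} (\<lambda>t. G t * f t)"
      by (rule continuous_on_subset[OF Gfc]) (use ax xm my yb in auto)
    show "G t * f t = G3 t * f t" if "t \<in> {y..b}" for t using that by (simp add: G3eq)
  qed


  have P1: "((\<lambda>t. G1 t * f' t - F t) has_integral
          ((G1 x * f x - (x - a) * F x) - (G1 a * f a - (a - a) * F a))) {a..x}"
    using ax xm my yb by (intro piece_ftc[OF _ _ _ F_deriv f_deriv Fc c1 G1d]) auto
  have P2: "((\<lambda>t. G2 t * f' t - F t) has_integral
          ((G2 y * f y - (y - m) * F y) - (G2 x * f x - (x - m) * F x))) {x..y}"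
    using ax xm my yb by (intro piece_ftc[OF _ _ _ F_deriv f_deriv Fc c2 G2d]) auto
  have P3: "((\<lambda>t. G3 t * f' t - F t) has_integral
          ((G3 b * f b - (b - b) * F b) - (G3 y * f y - (y - b) * F y))) {y..b}"
    using ax xm my yb by (intro piece_ftc[OF _ _ _ F_deriv f_deriv Fc c3 G3d]) auto
  have Q1: "((\<lambda>t. G t * f' t - F t) has_integral
          ((G1 x * f x - (x - a) * F x) - (G1 a * f a - (a - a) * F a))) {a..x}"
    using G1eq by (intro has_integral_eq[OF _ P1]) auto
  have Q2: "((\<lambda>t. G t * f' t - F t) has_integral
          ((G2 y * f y - (y - m) * F y) - (G2 x * f x - (x - m) * F x))) {x..y}"
    using G2eq by (intro has_integral_eq[OF _ P2]) auto
  have Q3: "((\<lambda>t. G t * f' t - F t) has_integral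
          ((G3 b * f b - (b - b) * F b) - (G3 y * f y - (y - b) * F y))) {y..b}"
    using G3eq by (intro has_integral_eq[OF _ P3]) auto
  have Q: "((\<lambda>t. G t * f' t - F t) has_integral (- h * (F x + F y))) {a..b}"
  proof -
    have H: "((\<lambda>t. G t * f' t - F t) has_integral
          (((G1 x * f x - (x - a) * F x) - (G1 a * f a - (a - a) * F a))
          + ((G2 y * f y - (y - m) * F y) - (G2 x * f x - (x - m) * F x))
          + ((G3 b * f b - (b - b) * F b) - (G3 y * f y - (y - b) * F y)))) {a..b}"
      using ax xm my yb
      by (intro has_integral_combine[OF _ _ has_integral_combine[OF _ _ Q1 Q2] Q3]) auto
    have e: "G1 a = 0" "G3 b = 0" "G2 x = G1 x" by (simp_all add: G1_def G2_def G3_def)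
    have e2: "G2 y = G3 y"
      by (simp add: G2_def G3_def y_def h_def power2_eq_square field_simps)
    show ?thesis
    proof (rule has_integral_eq_rhs[OF H])
      show "- h * (F x + F y) = ((G1 x * f x - (x - a) * F x) - (G1 a * f a - (a - a) * F a))
          + ((G2 y * f y - (y - m) * F y) - (G2 x * f x - (x - m) * F x))
          + ((G3 b * f b - (b - b) * F b) - (G3 y * f y - (y - b) * F y))"
        unfolding e e2 by (simp add: y_def m_def h_def field_simps)
    qed
  qed
  define I where "I = integral {a..b} (\<lambda>t. G t * f' t)"
  have Ihas: "((\<lambda>t. G t * f' t) has_integral (- h * (F x + F y) + intF)) {a..b}"
    using has_integral_add[OF Q Fhas] by simp
  then have Ival: "I = - h * (F x + F y) + intF" by (simp add: I_def integral_unique)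
  have lhs: "(F x + F (a + b - x)) / 2 - (b - expect_dens a b f) / (b - a) = - I / (b - a)"
    using ab unfolding E Ival y_def[symmetric] h_def by (simp add: field_simps)
  have IhasI: "((\<lambda>t. G t * f' t) has_integral I) {a..b}"
    using Ihas Ival by simp

  define Phi where "Phi t = (t - m)^5/20 + d * (t - m)^3/3 + d^2 * t" for t
  define Aval where "Aval = u^5/10 + v^5/10 + 2 * d * v^3/3 + 2 * d^2 * v"
  have G2alt: "G2 t = (t - m)^2/2 + d" for t
    by (simp add: G2_def d_def u_def v_def m_def h_def power2_eq_square field_simps)
  have R1: "((\<lambda>t. (G1 t)^2) has_integral ((x - a)^5/20 - (a - a)^5/20)) {a..x}"
  proof (rule poly_int)
    show "a \<le> x" using ax .
    show "((\<lambda>t. (t - a)^5/20) has_real_derivative (G1 t)^2) (at t)" for t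
      by (auto intro!: derivative_eq_intros simp: G1_def field_simps eval_nat_numeral)
  qed
  have R2: "((\<lambda>t. (G2 t)^2) has_integral (Phi y - Phi x)) {x..y}"
  proof (rule poly_int)
    show "x \<le> y" using xm my by simp
    show "(Phi has_real_derivative (G2 t)^2) (at t)" for t
      unfolding G2alt Phi_def
      by (auto intro!: derivative_eq_intros simp: field_simps eval_nat_numeral)
  qed
  have R3: "((\<lambda>t. (G3 t)^2) has_integral ((b - b)^5/20 - (y - b)^5/20)) {y..b}"
  proof (rule poly_int)
    show "y \<le> b" using yb .
    show "((\<lambda>t. (t - b)^5/20) has_real_derivative (G3 t)^2) (at t)" for t
      by (auto intro!: derivative_eq_intros simp: G3_def field_simps eval_nat_numeral)
  qed
  have S1: "((\<lambda>t. (G t)^2) has_integral ((x - a)^5/20 - (a - a)^5/20)) {a..x}"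
    using G1eq by (intro has_integral_eq[OF _ R1]) auto
  have S2: "((\<lambda>t. (G t)^2) has_integral (Phi y - Phi x)) {x..y}"
    using G2eq by (intro has_integral_eq[OF _ R2]) auto
  have S3: "((\<lambda>t. (G t)^2) has_integral ((b - b)^5/20 - (y - b)^5/20)) {y..b}"
    using G3eq by (intro has_integral_eq[OF _ R3]) auto
  have Ahas: "((\<lambda>t. (G t)^2) has_integral Aval) {a..b}"
  proof -
    have H: "((\<lambda>t. (G t)^2) has_integral
        (((x - a)^5/20 - (a - a)^5/20) + (Phi y - Phi x) + ((b - b)^5/20 - (y - b)^5/20))) {a..b}"
      using ax xm my yb
      by (intro has_integral_combine[OF _ _ has_integral_combine[OF _ _ S1 S2] S3]) auto
    have yv: "y - m = v" "x - m = -v" "y - b = -u" "x - a = u" "y = x + 2 * v"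
      by (simp_all add: y_def m_def u_def v_def field_simps)
    have "Phi y - Phi x = v^5/10 + 2 * d * v^3/3 + 2 * d^2 * v"
      unfolding Phi_def yv(1,2) by (simp add: yv(5) field_simps eval_nat_numeral)
    then have "((x - a)^5/20 - (a - a)^5/20) + (Phi y - Phi x) + ((b - b)^5/20 - (y - b)^5/20) = Aval"
      unfolding yv(3,4) Aval_def by (simp add: field_simps eval_nat_numeral)
    then show ?thesis using H by simp
  qed
  have A0: "Aval \<ge> 0" by (rule has_integral_nonneg[OF Ahas]) simp
  define Q where "Q = (b - a)^2 / 48 + (x - (3 * a + b) / 4)^2"
  have ba: "b - a = 2 * (u+v)" and xq: "x - (3 * a + b) / 4 = (u - v)/2"
    by (simp_all add: u_def v_def m_def field_simps)
  have Apoly: "10 * Aval \<le> (b - a)^3 * Q"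
  proof -
    have "(b - a)^3 * Q - 10 * Aval
       = 5/3 * u^5 + 1/3 * u^4 * v + 8/3 * u^3 * v^2 + 28/3 * u^2 * v^3 + 16/3 * u * v^4"
      unfolding Q_def ba xq Aval_def d_def by (simp add: field_simps eval_nat_numeral)
    moreover have "0 \<le> 5/3 * u^5 + 1/3 * u^4 * v + 8/3 * u^3 * v^2 + 28/3 * u^2 * v^3 + 16/3 * u * v^4"
      using u0 v0 by (intro add_nonneg_nonneg mult_nonneg_nonneg) auto
    ultimately show ?thesis by linarith
  qed
  have pi2: "pi^2 \<le> 10"
  proof -
    have "pi \<le> 3.16" using pi_approx(2) by simp
    then have "pi^2 \<le> 3.16^2" using pi_gt_zero by (intro power_mono) auto
    moreover have "(3.16::real)^2 \<le> 10" by (simp add: power2_eq_square)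
    ultimately show ?thesis by linarith
  qed
  have Qpos: "Q > 0" unfolding Q_def using ab by (intro add_pos_nonneg) auto
  define r where "r = sqrt ((b - a)^3 * Q) / pi"
  have r0: "r > 0" unfolding r_def using ab Qpos by (intro divide_pos_pos) auto
  have r2: "r^2 = (b - a)^3 * Q / pi^2"
    unfolding r_def using ab Qpos by (simp add: power_divide)
  have Ar: "Aval \<le> r^2"
  proof -
    have "pi^2 * Aval \<le> 10 * Aval" using pi2 A0 by (intro mult_right_mono) auto
    then have "pi^2 * Aval \<le> (b - a)^3 * Q" using Apoly by linarith
    then show ?thesis unfolding r2 by (simp add: field_simps)
  qed
  define B where "B = integral {a..b} (\<lambda>t. (f' t)^2)"
  have Bhas: "((\<lambda>t. (f' t)^2) has_integral B) {a..b}"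
    using f'_L2 by (simp add: B_def integrable_integral)
  have B0: "B \<ge> 0" by (rule has_integral_nonneg[OF Bhas]) simp
  have Ibound: "\<bar>I\<bar> \<le> r * sqrt B"
  proof (rule field_le_epsilon)
    fix e :: real assume e: "e > 0"
    define s where "s = sqrt B + e / r"
    have s0: "s > 0" unfolding s_def using e r0 B0 by (intro add_nonneg_pos) auto
    have sB: "B \<le> s^2"
    proof -
      have "sqrt B \<le> s" unfolding s_def using e r0 by simp
      then have "(sqrt B)^2 \<le> s^2" using B0 by (intro power_mono) auto
      then show ?thesis using B0 by simp
    qed
    have comb: "((\<lambda>t. s^2 * (G t)^2 + r^2 * (f' t)^2) has_integral (s^2 * Aval + r^2 * B)) {a..b}"
      by (intro has_integral_add has_integral_mult_right Ahas Bhas)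
    have I1: "((\<lambda>t. 2 * r * s * (G t * f' t)) has_integral (2 * r * s * I)) {a..b}"
      by (intro has_integral_mult_right IhasI)
    have I2: "((\<lambda>t. - (2 * r * s) * (G t * f' t)) has_integral (- (2 * r * s) * I)) {a..b}"
      by (intro has_integral_mult_right IhasI)
    have "2 * r * s * I \<le> s^2 * Aval + r^2 * B"
    proof (rule has_integral_le[OF I1 comb])
      fix t
      have "0 \<le> (s * G t - r * f' t)^2" by simp
      then show "2 * r * s * (G t * f' t) \<le> s^2 * (G t)^2 + r^2 * (f' t)^2"
        by (simp add: power2_eq_square algebra_simps)
    qed
    moreover have "- (2 * r * s) * I \<le> s^2 * Aval + r^2 * B"
    proof (rule has_integral_le[OF I2 comb])
      fix t
      have "0 \<le> (s * G t + r * f' t)^2" by simp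
      then show "- (2 * r * s) * (G t * f' t) \<le> s^2 * (G t)^2 + r^2 * (f' t)^2"
        by (simp add: power2_eq_square algebra_simps)
    qed
    moreover have "s^2 * Aval + r^2 * B \<le> s^2 * r^2 + r^2 * s^2"
      using Ar sB by (intro add_mono mult_left_mono) auto
    ultimately have "2 * r * s * \<bar>I\<bar> \<le> 2 * r * s * (r * s)"
      by (simp add: abs_if power2_eq_square algebra_simps)
    then have "\<bar>I\<bar> \<le> r * s" using r0 s0 by simp
    then show "\<bar>I\<bar> \<le> r * sqrt B + e" unfolding s_def using r0 by (simp add: algebra_simps)
  qed
  have rQ: "r / (b - a) = sqrt (b - a) / pi * sqrt Q"
  proof -
    have "sqrt ((b - a)^3 * Q) = (b - a) * sqrt (b - a) * sqrt Q"
      using ab by (simp add: real_sqrt_mult eval_nat_numeral)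
    then have "r = (b - a) * (sqrt (b - a) / pi * sqrt Q)" unfolding r_def by simp
    then show ?thesis using ab by simp
  qed
  have "\<bar>(F x + F (a + b - x)) / 2 - (b - expect_dens a b f) / (b - a)\<bar> = \<bar>I\<bar> / (b - a)"
    unfolding lhs using ab by simp
  also have "\<dots> \<le> r * sqrt B / (b - a)" using Ibound ab by (simp add: divide_right_mono)
  also have "\<dots> = sqrt (b - a) / pi * sqrt Q * sqrt B"
  proof -
    have "r * sqrt B / (b - a) = r / (b - a) * sqrt B" by simp
    then show ?thesis by (simp only: rQ)
  qed
  finally show ?thesis unfolding Q_def B_def l2norm_on_def .
qed
end
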